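(* Let $R$ be a local $\mathbb{F}_p$-algebra and let $M$ be a finitely presented $R$-module such that $F_R^*M\simeq M$, where $F_R$ is the absolute Frobenius of $R$. Then $M$ is free. *)

theory Defs
  imports Main HOL.Modules "HOL-Computational_Algebra.Primes"
begin

definition is_ideal :: "'a::comm_ring_1 set \<Rightarrow> bool" where
  "is_ideal I \<longleftrightarrow> 0 \<in> I \<and> (\<forall>x\<in>I. \<forall>y\<in>I. x + y \<in> I) \<and> (\<forall>r. \<forall>x\<in>I. r * x \<in> I)"

definition maximal_ideal :: "'a::comm_ring_1 set \<Rightarrow> bool" where
  "maximal_ideal I \<longleftrightarrow> is_ideal I \<and> I \<noteq> UNIV \<and>
     (\<forall>J. is_ideal J \<longrightarrow> I \<subseteq> J \<longrightarrow> J = I \<or> J = UNIV)"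

definition local_ring :: "'a::comm_ring_1 itself \<Rightarrow> bool" where
  "local_ring _ \<longleftrightarrow> (\<exists>!I::'a set. maximal_ideal I)"

text \<open>M (the type 'b with scalar multiplication scale) is finitely presented:
  there are finitely many generators g 0, ..., g (n-1), and the module of
  relations among them (a submodule of R^n, vectors encoded as nat-indexed
  functions vanishing from n on) is generated by a finite set K.\<close>
definition fin_presented :: "('a::comm_ring_1 \<Rightarrow> 'b::ab_group_add \<Rightarrow> 'b) \<Rightarrow> bool" where
  "fin_presented scale \<longleftrightarrow>
     (\<exists>(n::nat) (g::nat \<Rightarrow> 'b). module.span scale (g ` {..<n}) = UNIV \<and>
        (let Rel = {c::nat \<Rightarrow> 'a. (\<forall>i\<ge>n. c i = 0) \<and> (\<Sum>i<n. scale (c i) (g i)) = 0}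
         in \<exists>K. finite K \<and> K \<subseteq> Rel \<and>
              (\<forall>c\<in>Rel. \<exists>a::(nat \<Rightarrow> 'a) \<Rightarrow> 'a. c = (\<lambda>i. \<Sum>k\<in>K. a k * k i))))"

definition free_module :: "('a::comm_ring_1 \<Rightarrow> 'b::ab_group_add \<Rightarrow> 'b) \<Rightarrow> bool" where
  "free_module scale \<longleftrightarrow> (\<exists>B. module.independent scale B \<and> module.span scale B = UNIV)"

text \<open>Built as the free abelian group on R \<times> M (finitely supported int-valued
  functions) modulo the subgroup generated by the bilinearity relations and
  (s * a^p) \<otimes> m = s \<otimes> (a m); R acts on the left tensor factor.\<close>

definition fsupp :: "('c \<Rightarrow> int) \<Rightarrow> bool" where
  "fsupp c \<longleftrightarrow> finite {x. c x \<noteq> 0}"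

definition delta :: "'c \<Rightarrow> 'c \<Rightarrow> int" where
  "delta x = (\<lambda>y. if y = x then 1 else 0)"

inductive_set frob_rel :: "('a::comm_ring_1 \<Rightarrow> 'b::ab_group_add \<Rightarrow> 'b) \<Rightarrow> nat \<Rightarrow> (('a \<times> 'b) \<Rightarrow> int) set"
  for scale :: "'a::comm_ring_1 \<Rightarrow> 'b::ab_group_add \<Rightarrow> 'b" and p :: nat where
  zero: "(\<lambda>_. 0) \<in> frob_rel scale p"
| add_left: "(\<lambda>x. delta (s + s', m) x - delta (s, m) x - delta (s', m) x) \<in> frob_rel scale p"
| add_right: "(\<lambda>x. delta (s, m + m') x - delta (s, m) x - delta (s, m') x) \<in> frob_rel scale p"
| frob: "(\<lambda>x. delta (s * a ^ p, m) x - delta (s, scale a m) x) \<in> frob_rel scale p"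
| plus: "c \<in> frob_rel scale p \<Longrightarrow> d \<in> frob_rel scale p \<Longrightarrow> (\<lambda>x. c x + d x) \<in> frob_rel scale p"
| uminus: "c \<in> frob_rel scale p \<Longrightarrow> (\<lambda>x. - c x) \<in> frob_rel scale p"

definition frob_cls :: "('a::comm_ring_1 \<Rightarrow> 'b::ab_group_add \<Rightarrow> 'b) \<Rightarrow> nat \<Rightarrow> (('a \<times> 'b) \<Rightarrow> int) \<Rightarrow> (('a \<times> 'b) \<Rightarrow> int) set" where
  "frob_cls scale p c = {d. (\<lambda>x. c x - d x) \<in> frob_rel scale p}"

definition frob_pullback :: "('a::comm_ring_1 \<Rightarrow> 'b::ab_group_add \<Rightarrow> 'b) \<Rightarrow> nat \<Rightarrow> (('a \<times> 'b) \<Rightarrow> int) set set" where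
  "frob_pullback scale p = frob_cls scale p ` {c. fsupp c}"

text \<open>R-action on formal sums: r \<cdot> (s, m) = (r s, m), extended additively.\<close>
definition frob_act :: "'a::comm_ring_1 \<Rightarrow> (('a \<times> 'b) \<Rightarrow> int) \<Rightarrow> (('a \<times> 'b) \<Rightarrow> int)" where
  "frob_act r c = (\<lambda>(s, m). \<Sum>s'\<in>{s'. r * s' = s \<and> c (s', m) \<noteq> 0}. c (s', m))"

definition frob_pullback_iso :: "('a::comm_ring_1 \<Rightarrow> 'b::ab_group_add \<Rightarrow> 'b) \<Rightarrow> nat \<Rightarrow> ('b \<Rightarrow> (('a \<times> 'b) \<Rightarrow> int) set) \<Rightarrow> bool" where
  "frob_pullback_iso scale p h \<longleftrightarrow>
     bij_betw h UNIV (frob_pullback scale p) \<and>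
     (\<forall>x y c d. fsupp c \<longrightarrow> fsupp d \<longrightarrow> h x = frob_cls scale p c \<longrightarrow> h y = frob_cls scale p d \<longrightarrow>
         h (x + y) = frob_cls scale p (\<lambda>z. c z + d z)) \<and>
     (\<forall>r x c. fsupp c \<longrightarrow> h x = frob_cls scale p c \<longrightarrow>
         h (scale r x) = frob_cls scale p (frob_act r c))"

end

theory Submission
  imports Defs
begin

lemma ideal_principal: "is_ideal {r * (x::'a::comm_ring_1) | r. True}"
  unfolding is_ideal_def
  by (auto simp: algebra_simps) (metis mult.assoc mult_zero_left distrib_right)+

lemma ideal_mult: "is_ideal I \<Longrightarrow> x \<in> I \<Longrightarrow> r * x \<in> I"
  unfolding is_ideal_def by blast
lemma ideal_add: "is_ideal I \<Longrightarrow> x \<in> I \<Longrightarrow> y \<in> I \<Longrightarrow> x + y \<in> I"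
  unfolding is_ideal_def by blast
lemma ideal_zero: "is_ideal I \<Longrightarrow> 0 \<in> I"
  unfolding is_ideal_def by blast
lemma ideal_mult_right: "is_ideal I \<Longrightarrow> x \<in> I \<Longrightarrow> x * r \<in> I"
  using ideal_mult[of I x r] by (simp add: mult.commute)
lemma ideal_neg: "is_ideal I \<Longrightarrow> x \<in> I \<Longrightarrow> - x \<in> I"
  using ideal_mult[of I x "-1"] by simp
lemma ideal_diff: "is_ideal I \<Longrightarrow> x \<in> I \<Longrightarrow> y \<in> I \<Longrightarrow> x - y \<in> I"
  using ideal_add[of I x "-y"] ideal_neg[of I y] by simp
lemma ideal_sum: "is_ideal I \<Longrightarrow> (\<And>x. x \<in> A \<Longrightarrow> f x \<in> I) \<Longrightarrow> sum f A \<in> I"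
  by (induction A rule: infinite_finite_induct) (auto simp: ideal_zero ideal_add)
lemma ideal_one_UNIV: "is_ideal I \<Longrightarrow> 1 \<in> I \<Longrightarrow> I = UNIV"
  using ideal_mult[of I 1] by auto

lemma exists_maximal:
  fixes J :: "'a::comm_ring_1 set"
  assumes "is_ideal J" "1 \<notin> J"
  shows "\<exists>M. maximal_ideal M \<and> J \<subseteq> M"
proof -
  define A where "A = {I. is_ideal I \<and> J \<subseteq> I \<and> 1 \<notin> I}"
  have "\<exists>M\<in>A. \<forall>X\<in>A. M \<subseteq> X \<longrightarrow> X = M"
  proof (rule subset_Zorn_nonempty)
    show "A \<noteq> {}" using assms A_def by blast
  next
    fix C assume C: "C \<noteq> {}" "subset.chain A C"
    then have CA: "C \<subseteq> A" and ch: "\<forall>X\<in>C. \<forall>Y\<in>C. X \<subseteq> Y \<or> Y \<subseteq> X"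
      by (auto simp: subset.chain_def)
    obtain X0 where X0: "X0 \<in> C" using C by blast
    have "is_ideal (\<Union>C)"
      unfolding is_ideal_def
    proof (intro conjI ballI allI)
      show "0 \<in> \<Union>C" using X0 CA A_def ideal_zero by blast
    next
      fix x y assume "x \<in> \<Union>C" "y \<in> \<Union>C"
      then obtain X Y where "X \<in> C" "Y \<in> C" "x \<in> X" "y \<in> Y" by blast
      then show "x + y \<in> \<Union>C" using ch CA A_def ideal_add
        by (metis (no_types, lifting) UnionI mem_Collect_eq subset_iff)
    next
      fix r x assume "x \<in> \<Union>C"
      then show "r * x \<in> \<Union>C" using CA A_def ideal_mult by blast
    qed
    then show "\<Union>C \<in> A" using CA X0 A_def by auto
  qed
  then obtain M where M: "M \<in> A" "\<forall>X\<in>A. M \<subseteq> X \<longrightarrow> X = M" by blast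
  have "maximal_ideal M"
    unfolding maximal_ideal_def
  proof (intro conjI allI impI)
    show "is_ideal M" using M A_def by auto
    show "M \<noteq> UNIV" using M A_def by auto
  next
    fix K assume K: "is_ideal K" "M \<subseteq> K"
    show "K = M \<or> K = UNIV"
    proof (cases "1 \<in> K")
      case True then show ?thesis using ideal_one_UNIV K by blast
    next
      case False then show ?thesis using M K A_def by auto
    qed
  qed
  then show ?thesis using M A_def by auto
qed

lemma local_ring_max:
  assumes "local_ring TYPE('a)"
  obtains mx :: "'a::comm_ring_1 set" where "is_ideal mx" "1 \<notin> mx" "\<And>x. x \<notin> mx \<Longrightarrow> x dvd 1"
proof -
  obtain mx :: "'a set" where mx: "maximal_ideal mx" "\<And>J. maximal_ideal J \<Longrightarrow> J = mx"
    using assms unfolding local_ring_def by blast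
  have i: "is_ideal mx" "1 \<notin> mx" using mx(1) ideal_one_UNIV unfolding maximal_ideal_def by blast+
  have "x dvd 1" if "x \<notin> mx" for x
  proof (rule ccontr)
    assume nd: "\<not> x dvd 1"
    let ?J = "{r * x | r. True}"
    have "1 \<notin> ?J" using nd by (auto simp: dvd_def mult.commute)
    then obtain M where "maximal_ideal M" "?J \<subseteq> M" using exists_maximal ideal_principal by blast
    then have "x \<in> mx" using mx(2) by (metis (mono_tags, lifting) mem_Collect_eq mult_1 subset_iff)
    then show False using that by blast
  qed
  then show ?thesis using that i by blast
qed

definition Rl :: "('a::comm_ring_1 \<Rightarrow> 'b::ab_group_add \<Rightarrow> 'b) \<Rightarrow> nat set \<Rightarrow> (nat \<Rightarrow> 'b) \<Rightarrow> (nat \<Rightarrow> 'a) set" where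
  "Rl scale S g = {c. (\<forall>i. i \<notin> S \<longrightarrow> c i = 0) \<and> (\<Sum>i\<in>S. scale (c i) (g i)) = 0}"

definition pres :: "('a::comm_ring_1 \<Rightarrow> 'b::ab_group_add \<Rightarrow> 'b) \<Rightarrow> nat set \<Rightarrow> (nat \<Rightarrow> 'b) \<Rightarrow> (nat \<Rightarrow> 'a) set \<Rightarrow> ((nat \<Rightarrow> 'a) \<Rightarrow> nat \<Rightarrow> 'a) \<Rightarrow> bool" where
  "pres scale S g L \<kappa> \<longleftrightarrow> finite S \<and> module.span scale (g ` S) = UNIV \<and> finite L \<and>
     (\<forall>l\<in>L. \<kappa> l \<in> Rl scale S g) \<and> (\<forall>c\<in>Rl scale S g. \<exists>a. c = (\<lambda>i. \<Sum>l\<in>L. a l * \<kappa> l i))"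

lemma fin_presented_pres:
  assumes "fin_presented scale"
  shows "\<exists>S g L \<kappa>. pres scale S g L \<kappa>"
proof -
  obtain n g K where sp: "module.span scale (g ` {..<n}) = UNIV"
    and K: "finite K" "K \<subseteq> {c. (\<forall>i\<ge>n. c i = 0) \<and> (\<Sum>i<n. scale (c i) (g i)) = 0}"
    "\<forall>c\<in>{c. (\<forall>i\<ge>n. c i = 0) \<and> (\<Sum>i<n. scale (c i) (g i)) = 0}. \<exists>a::(nat \<Rightarrow> 'a) \<Rightarrow> 'a. c = (\<lambda>i. \<Sum>k\<in>K. a k * k i)"
    using assms unfolding fin_presented_def Let_def by blast
  have R: "Rl scale {..<n} g = {c. (\<forall>i\<ge>n. c i = 0) \<and> (\<Sum>i<n. scale (c i) (g i)) = 0}"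
    unfolding Rl_def by auto
  have "pres scale {..<n} g K id"
    unfolding pres_def R using sp K by auto
  then show ?thesis by blast
qed

context module begin

lemma span_image_repr:
  assumes fin: "finite S" and y: "y \<in> span (g ` S)"
  shows "\<exists>a. y = (\<Sum>i\<in>S. a i *s g i)"
  using y
proof (induction rule: span_induct_alt)
  case base
  then show ?case by (auto intro!: exI[of _ "\<lambda>_. 0"])
next
  case (step c x y)
  then obtain j a where j: "j \<in> S" "x = g j" and a: "y = (\<Sum>i\<in>S. a i *s g i)" by blast
  show ?case
  proof (cases "finite S")
    case True
    have "c *s x + y = (\<Sum>i\<in>S. (if i = j then c else 0) *s g i) + (\<Sum>i\<in>S. a i *s g i)"
      using j True a by (simp add: if_distrib[of "\<lambda>t. t *s _"] sum.delta cong: if_cong)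
    also have "\<dots> = (\<Sum>i\<in>S. ((if i = j then c else 0) + a i) *s g i)"
      by (simp add: sum.distrib scale_left_distrib)
    finally have eq: "c *s x + y = (\<Sum>i\<in>S. ((if i = j then c else 0) + a i) *s g i)" .
    show ?thesis apply (rule exI) by (rule eq)
  next
    case False
    then show ?thesis using fin by simp
  qed
qed

lemma span_image_repr_supp:
  assumes "finite S" "y \<in> span (g ` S)"
  shows "\<exists>a. (\<forall>i. i \<notin> S \<longrightarrow> a i = 0) \<and> y = (\<Sum>i\<in>S. a i *s g i)"
proof -
  obtain a where a: "y = (\<Sum>i\<in>S. a i *s g i)" using span_image_repr[OF assms] by blast
  show ?thesis
    by (rule exI[of _ "\<lambda>i. if i \<in> S then a i else 0"]) (simp add: a)
qed

end

context module begin
lemma pres_drop: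
  assumes P: "pres scale S g L \<kappa>" and c: "c \<in> Rl scale S g" and j: "j \<in> S" and u: "c j * u = 1"
  shows "pres scale (S - {j}) g L (\<lambda>l i. \<kappa> l i - \<kappa> l j * u * c i)"
proof -
  have fS: "finite S" and sp: "span (g ` S) = UNIV" and fL: "finite L"
    and kR: "\<forall>l\<in>L. \<kappa> l \<in> Rl scale S g"
    and gen: "\<forall>c\<in>Rl scale S g. \<exists>a. c = (\<lambda>i. \<Sum>l\<in>L. a l * \<kappa> l i)"
    using P unfolding pres_def by auto
  have c0: "\<forall>i. i \<notin> S \<longrightarrow> c i = 0" and c1: "(\<Sum>i\<in>S. c i *s g i) = 0"
    using c unfolding Rl_def by auto
  let ?S' = "S - {j}"
  have split: "(\<Sum>i\<in>S. f i) = f j + (\<Sum>i\<in>?S'. f i)" for f :: "nat \<Rightarrow> 'b"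
    using sum.remove[OF fS j] by simp
  have "0 = u *s (\<Sum>i\<in>S. c i *s g i)" using c1 by simp
  also have "\<dots> = (\<Sum>i\<in>S. (u * c i) *s g i)" by (simp add: scale_sum_right)
  also have "\<dots> = g j + (\<Sum>i\<in>?S'. (u * c i) *s g i)"
    using split u by (simp add: mult.commute)
  finally have "g j = - (\<Sum>i\<in>?S'. (u * c i) *s g i)" by (simp add: eq_neg_iff_add_eq_0)
  moreover have "(\<Sum>i\<in>?S'. (u * c i) *s g i) \<in> span (g ` ?S')"
    by (intro span_sum span_scale span_base) auto
  ultimately have gj: "g j \<in> span (g ` ?S')"
    using span_neg by metis
  have "g ` S \<subseteq> span (g ` ?S')"
  proof
    fix y assume "y \<in> g ` S"
    then obtain i where i: "i \<in> S" "y = g i" by blast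
    show "y \<in> span (g ` ?S')"
    proof (cases "i = j")
      case True then show ?thesis using gj i by simp
    next
      case False then show ?thesis using i by (intro span_base) auto
    qed
  qed
  then have sp': "span (g ` ?S') = UNIV"
    using sp span_minimal[of "g ` S" "span (g ` ?S')"] by auto
  have RS': "Rl scale ?S' g = {d \<in> Rl scale S g. d j = 0}"
  proof -
    have "(\<Sum>i\<in>S. d i *s g i) = (\<Sum>i\<in>?S'. d i *s g i)" if "d j = 0" for d
      using split[of "\<lambda>i. d i *s g i"] that by simp
    then show ?thesis unfolding Rl_def using j by auto
  qed
  show ?thesis
    unfolding pres_def
  proof (intro conjI ballI)
    show "finite ?S'" using fS by simp
    show "span (g ` ?S') = UNIV" by (rule sp')
    show "finite L" by (rule fL)
  next
    fix l assume l: "l \<in> L"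
    have kl: "\<forall>i. i \<notin> S \<longrightarrow> \<kappa> l i = 0" "(\<Sum>i\<in>S. \<kappa> l i *s g i) = 0"
      using kR l unfolding Rl_def by auto
    have "(\<Sum>i\<in>S. (\<kappa> l i - \<kappa> l j * u * c i) *s g i)
        = (\<Sum>i\<in>S. \<kappa> l i *s g i) - (\<kappa> l j * u) *s (\<Sum>i\<in>S. c i *s g i)"
      by (simp add: scale_left_diff_distrib sum_subtractf scale_sum_right mult.assoc)
    also have "\<dots> = 0" using kl c1 by simp
    finally have "(\<lambda>i. \<kappa> l i - \<kappa> l j * u * c i) \<in> Rl scale S g"
      unfolding Rl_def using kl c0 by auto
    moreover have "\<kappa> l j * u * c j = \<kappa> l j * (c j * u)" by (simp add: ac_simps)
    then have "\<kappa> l j - \<kappa> l j * u * c j = 0" using u by simp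
    ultimately show "(\<lambda>i. \<kappa> l i - \<kappa> l j * u * c i) \<in> Rl scale ?S' g"
      unfolding RS' by simp
  next
    fix d assume d: "d \<in> Rl scale ?S' g"
    then have dS: "d \<in> Rl scale S g" and dj: "d j = 0" unfolding RS' by auto
    obtain a where a: "d = (\<lambda>i. \<Sum>l\<in>L. a l * \<kappa> l i)" using gen dS by blast
    have e: "(\<Sum>l\<in>L. a l * (\<kappa> l i - \<kappa> l j * u * c i))
        = (\<Sum>l\<in>L. a l * \<kappa> l i) - (\<Sum>l\<in>L. a l * \<kappa> l j) * u * c i" for i
      by (simp add: right_diff_distrib sum_subtractf sum_distrib_right mult.assoc)
    have dd: "d i = (\<Sum>l\<in>L. a l * \<kappa> l i)" for i using a by simp
    have "d i = (\<Sum>l\<in>L. a l * (\<kappa> l i - \<kappa> l j * u * c i))" for i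
      unfolding e using dd[of j, symmetric] dj dd[of i] by simp
    then show "\<exists>a. d = (\<lambda>i. \<Sum>l\<in>L. a l * (\<kappa> l i - \<kappa> l j * u * c i))"
      by (intro exI[of _ a]) (simp add: fun_eq_iff)
  qed
qed

end

lemma fsupp_zero[simp]: "fsupp (\<lambda>_. 0)" by (simp add: fsupp_def)
lemma fsupp_delta[simp]: "fsupp (delta z)"
proof -
  have "{y. delta z y \<noteq> 0} = {z}" by (auto simp: delta_def)
  then show ?thesis by (simp add: fsupp_def)
qed
lemma fsupp_add[simp]: "fsupp c \<Longrightarrow> fsupp d \<Longrightarrow> fsupp (\<lambda>z. c z + d z)"
  unfolding fsupp_def by (rule finite_subset[of _ "{x. c x \<noteq> 0} \<union> {x. d x \<noteq> 0}"]) auto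
lemma fsupp_neg[simp]: "fsupp c \<Longrightarrow> fsupp (\<lambda>z. - c z)"
  unfolding fsupp_def by simp
lemma fsupp_sum: "finite A \<Longrightarrow> (\<And>i. i \<in> A \<Longrightarrow> fsupp (f i)) \<Longrightarrow> fsupp (\<lambda>z. \<Sum>i\<in>A. f i z)"
proof (induction A rule: finite_induct)
  case empty then show ?case by simp
next
  case (insert x F)
  then show ?case using fsupp_add[of "f x" "\<lambda>z. \<Sum>i\<in>F. f i z"] by simp
qed

lemma fsupp_delta3: "fsupp (\<lambda>x. delta a x - delta b x - delta c x)"
  unfolding fsupp_def by (rule finite_subset[of _ "{a,b,c}"]) (auto simp: delta_def)

lemma frob_rel_fsupp: "c \<in> frob_rel scale p \<Longrightarrow> fsupp c"
proof (induction rule: frob_rel.induct)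
  case (frob s a m)
  show ?case unfolding fsupp_def
    by (rule finite_subset[of _ "{(s * a ^ p, m), (s, scale a m)}"]) (auto simp: delta_def)
qed (auto simp: fsupp_delta3)

lemma fsupp_induct:
  assumes c: "fsupp c"
    and zero: "P (\<lambda>_. 0)"
    and add: "\<And>c d. fsupp c \<Longrightarrow> fsupp d \<Longrightarrow> P c \<Longrightarrow> P d \<Longrightarrow> P (\<lambda>z. c z + d z)"
    and neg: "\<And>c. fsupp c \<Longrightarrow> P c \<Longrightarrow> P (\<lambda>z. - c z)"
    and del: "\<And>z. P (delta z)"
  shows "P c"
proof -
  have mult: "P (\<lambda>w. k * delta z w)" for k z
  proof -
    have nat: "P (\<lambda>w. int n * delta z w)" for n
    proof (induction n)
      case 0 then show ?case using zero by simp
    next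
      case (Suc n)
      have f1: "fsupp (\<lambda>w. int n * delta z w)"
        unfolding fsupp_def by (rule finite_subset[of _ "{z}"]) (auto simp: delta_def)
      have "P (\<lambda>w. (\<lambda>w. int n * delta z w) w + delta z w)"
        using add[OF f1 fsupp_delta Suc.IH del] .
      then show ?case by (simp add: algebra_simps)
    qed
    show ?thesis
    proof (cases "k \<ge> 0")
      case True
      then obtain n where "k = int n" using nonneg_int_cases by blast
      then show ?thesis using nat by simp
    next
      case False
      define n where "n = nat (- k)"
      have n: "k = - int n" using False unfolding n_def by simp
      have f1: "fsupp (\<lambda>w. int n * delta z w)"
        unfolding fsupp_def by (rule finite_subset[of _ "{z}"]) (auto simp: delta_def)
      have "P (\<lambda>w. - (\<lambda>w. int n * delta z w) w)" using neg[OF f1 nat] .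
      then show ?thesis using n by simp
    qed
  qed
  have "\<forall>c. {x. c x \<noteq> 0} \<subseteq> F \<longrightarrow> P c" if "finite F" for F
    using that
  proof (induction F rule: finite_induct)
    case empty
    have "c = (\<lambda>_. 0)" if "{x. c x \<noteq> 0} \<subseteq> {}" for c :: "'a \<Rightarrow> int"
      using that by auto
    then show ?case using zero by blast
  next
    case (insert z F)
    show ?case
    proof (intro allI impI)
      fix c :: "'a \<Rightarrow> int" assume sub: "{x. c x \<noteq> 0} \<subseteq> insert z F"
      define c' where "c' = (\<lambda>w. if w = z then 0 else c w)"
      have s1: "{x. c' x \<noteq> 0} \<subseteq> F" using sub unfolding c'_def by auto
      then have P1: "P c'" using insert.IH by blast
      have f1: "fsupp c'" using s1 insert.hyps(1) finite_subset unfolding fsupp_def by blast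
      have f2: "fsupp (\<lambda>w. c z * delta z w)"
        unfolding fsupp_def by (rule finite_subset[of _ "{z}"]) (auto simp: delta_def)
      have "P (\<lambda>w. c' w + c z * delta z w)" using add[OF f1 f2 P1 mult] .
      moreover have "(\<lambda>w. c' w + c z * delta z w) = c"
        by (auto simp: c'_def delta_def fun_eq_iff)
      ultimately show "P c" by simp
    qed
  qed
  then show ?thesis using c unfolding fsupp_def by blast
qed

lemma nakayama:
  fixes mx :: "'a::comm_ring_1 set"
  assumes I: "is_ideal mx" and unit: "\<And>x. x \<notin> mx \<Longrightarrow> x dvd 1" and pr: "1 \<notin> mx"
    and fin: "finite X"
  shows "(\<forall>x\<in>X. \<exists>b. (\<forall>y\<in>X. b y \<in> mx) \<and> x = (\<Sum>y\<in>X. b y * y)) \<Longrightarrow> (\<forall>x\<in>X. x = 0)"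
  using fin
proof (induction X rule: finite_induct)
  case empty then show ?case by simp
next
  case (insert x0 F)
  obtain b0 where b0: "\<forall>y\<in>insert x0 F. b0 y \<in> mx" "x0 = (\<Sum>y\<in>insert x0 F. b0 y * y)"
    using insert.prems by blast
  have e0: "x0 = b0 x0 * x0 + (\<Sum>y\<in>F. b0 y * y)" using b0(2) insert.hyps by simp
  have "1 - b0 x0 \<notin> mx"
  proof
    assume "1 - b0 x0 \<in> mx"
    then have "(1 - b0 x0) + b0 x0 \<in> mx" using ideal_add[OF I] b0(1) by blast
    then show False using pr by simp
  qed
  then have "(1 - b0 x0) dvd 1" using unit by blast
  then obtain v where v: "1 = (1 - b0 x0) * v" by (rule dvdE)
  have "(1 - b0 x0) * x0 = (\<Sum>y\<in>F. b0 y * y)" using e0 by (simp add: algebra_simps)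
  then have "v * ((1 - b0 x0) * x0) = (\<Sum>y\<in>F. (v * b0 y) * y)"
    by (simp add: sum_distrib_left mult.assoc)
  moreover have "v * ((1 - b0 x0) * x0) = ((1 - b0 x0) * v) * x0" by (simp add: ac_simps)
  then have "v * ((1 - b0 x0) * x0) = x0" using v by simp
  ultimately have ex0: "x0 = (\<Sum>y\<in>F. (v * b0 y) * y)" by simp
  have "\<forall>x\<in>F. \<exists>b. (\<forall>y\<in>F. b y \<in> mx) \<and> x = (\<Sum>y\<in>F. b y * y)"
  proof
    fix x assume x: "x \<in> F"
    obtain b where b: "\<forall>y\<in>insert x0 F. b y \<in> mx" "x = (\<Sum>y\<in>insert x0 F. b y * y)"
      using insert.prems x by blast
    have "x = b x0 * x0 + (\<Sum>y\<in>F. b y * y)" using b(2) insert.hyps by simp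
    also have "\<dots> = (\<Sum>y\<in>F. (b x0 * (v * b0 y) + b y) * y)"
      by (subst ex0) (simp add: sum_distrib_left sum.distrib algebra_simps)
    finally have "x = (\<Sum>y\<in>F. (b x0 * (v * b0 y) + b y) * y)" .
    moreover have "\<forall>y\<in>F. b x0 * (v * b0 y) + b y \<in> mx"
      using b(1) b0(1) ideal_add[OF I] ideal_mult[OF I] by auto
    ultimately show "\<exists>b. (\<forall>y\<in>F. b y \<in> mx) \<and> x = (\<Sum>y\<in>F. b y * y)"
      by (intro exI[of _ "\<lambda>y. b x0 * (v * b0 y) + b y"]) simp
  qed
  then have "\<forall>x\<in>F. x = 0" using insert.IH by blast
  then have "\<forall>y\<in>F. (v * b0 y) * y = 0" by (metis mult_zero_right)
  then have "(\<Sum>y\<in>F. (v * b0 y) * y) = 0" by (rule sum.neutral)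
  then have "x0 = 0" using ex0 by simp
  then show ?case using \<open>\<forall>x\<in>F. x = 0\<close> by simp
qed

locale frob_setup = module scale for scale :: "'a::comm_ring_1 \<Rightarrow> 'b::ab_group_add \<Rightarrow> 'b" (infixr \<open>*s\<close> 75) +
  fixes p :: nat and h :: "'b \<Rightarrow> (('a \<times> 'b) \<Rightarrow> int) set" and mx :: "'a set"
    and S :: "nat set" and g :: "nat \<Rightarrow> 'b" and L :: "(nat \<Rightarrow> 'a) set" and \<kappa> :: "(nat \<Rightarrow> 'a) \<Rightarrow> nat \<Rightarrow> 'a"
  assumes p_prime: "prime p" and charp: "CHAR('a) = p" and iso: "frob_pullback_iso scale p h"
    and mx_ideal: "is_ideal mx" and mx_proper: "1 \<notin> mx" and mx_unit: "\<And>x. x \<notin> mx \<Longrightarrow> x dvd 1"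
    and P: "pres scale S g L \<kappa>" and relm: "\<And>c i. c \<in> Rl scale S g \<Longrightarrow> c i \<in> mx"
begin

definition X where "X = (\<lambda>(l, j). \<kappa> l j) ` (L \<times> S)"
definition MI where "MI r \<longleftrightarrow> (\<exists>b. (\<forall>x\<in>X. b x \<in> mx) \<and> r = (\<Sum>x\<in>X. b x * x))"

lemma finS: "finite S" and finL: "finite L" and spanS: "span (g ` S) = UNIV"
  and kR: "\<And>l. l \<in> L \<Longrightarrow> \<kappa> l \<in> Rl scale S g"
  and gen: "\<And>c. c \<in> Rl scale S g \<Longrightarrow> \<exists>a. c = (\<lambda>i. \<Sum>l\<in>L. a l * \<kappa> l i)"
  using P unfolding pres_def by auto

lemma finX: "finite X" unfolding X_def using finS finL by simp

lemma p_pos: "p > 0" using p_prime prime_gt_0_nat by blast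

lemma frob_add: "(x + y) ^ p = x ^ p + (y::'a) ^ p"
  by (rule freshmans_dream) (simp_all add: charp p_prime)

lemma MI_0: "MI 0"
  unfolding MI_def by (intro exI[of _ "\<lambda>_. 0"]) (simp add: ideal_zero[OF mx_ideal])

lemma MI_add: "MI u \<Longrightarrow> MI v \<Longrightarrow> MI (u + v)"
  unfolding MI_def
proof (elim exE conjE)
  fix b1 b2 assume "\<forall>x\<in>X. b1 x \<in> mx" "u = (\<Sum>x\<in>X. b1 x * x)" "\<forall>x\<in>X. b2 x \<in> mx" "v = (\<Sum>x\<in>X. b2 x * x)"
  then show "\<exists>b. (\<forall>x\<in>X. b x \<in> mx) \<and> u + v = (\<Sum>x\<in>X. b x * x)"
    by (intro exI[of _ "\<lambda>x. b1 x + b2 x"]) (simp add: ideal_add[OF mx_ideal] sum.distrib distrib_right)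
qed

lemma MI_mult: "MI a \<Longrightarrow> MI (r * a)"
  unfolding MI_def
proof (elim exE conjE)
  fix b1 assume "\<forall>x\<in>X. b1 x \<in> mx" "a = (\<Sum>x\<in>X. b1 x * x)"
  then show "\<exists>b. (\<forall>x\<in>X. b x \<in> mx) \<and> r * a = (\<Sum>x\<in>X. b x * x)"
    by (intro exI[of _ "\<lambda>x. r * b1 x"]) (simp add: ideal_mult[OF mx_ideal] sum_distrib_left mult.assoc)
qed

lemma MI_mult_right: "MI a \<Longrightarrow> MI (a * r)"
  using MI_mult[of a r] by (simp add: mult.commute)

lemma MI_neg: "MI a \<Longrightarrow> MI (- a)"
  using MI_mult[of a "-1"] by simp

lemma MI_diff: "MI a \<Longrightarrow> MI b \<Longrightarrow> MI (a - b)"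
  using MI_add[of a "-b"] MI_neg[of b] by simp

lemma MI_sum: "(\<And>i. i \<in> A \<Longrightarrow> MI (f i)) \<Longrightarrow> MI (sum f A)"
  by (induction A rule: infinite_finite_induct) (auto simp: MI_0 MI_add)

lemma MI_gen: "e \<in> mx \<Longrightarrow> x \<in> X \<Longrightarrow> MI (e * x)"
  unfolding MI_def
  by (intro exI[of _ "\<lambda>y. if y = x then e else 0"])
     (simp add: ideal_zero[OF mx_ideal] if_distrib[of "\<lambda>t. t * _"] sum.delta[OF finX] cong: if_cong)

lemma R_out: "c \<in> Rl scale S g \<Longrightarrow> i \<notin> S \<Longrightarrow> c i = 0"
  unfolding Rl_def by auto

lemma MI_coord_mult:
  assumes c: "c \<in> Rl scale S g" and e: "e \<in> mx"
  shows "MI (e * c i)"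
proof (cases "i \<in> S")
  case False then show ?thesis using R_out[OF c] MI_0 by simp
next
  case True
  obtain a where a: "c = (\<lambda>i. \<Sum>l\<in>L. a l * \<kappa> l i)" using gen[OF c] by blast
  have "e * c i = (\<Sum>l\<in>L. (e * a l) * \<kappa> l i)"
    by (subst a) (simp add: sum_distrib_left mult.assoc)
  moreover have "MI ((e * a l) * \<kappa> l i)" if "l \<in> L" for l
    using that True by (intro MI_gen ideal_mult_right[OF mx_ideal] e) (auto simp: X_def)
  ultimately show ?thesis by (simp add: MI_sum)
qed

lemma MI_pow:
  assumes c: "c \<in> Rl scale S g"
  shows "MI (c i ^ p)"
proof -
  obtain q where q: "p = Suc q" using p_pos by (cases p) auto
  have "q \<ge> 1" using q p_prime by (cases q) auto
  then obtain r where r: "q = Suc r" by (cases q) auto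
  have "c i ^ q \<in> mx" using r relm[OF c] ideal_mult_right[OF mx_ideal] by simp
  then have "MI (c i ^ q * c i)" by (rule MI_coord_mult[OF c])
  then show ?thesis using q by (simp add: mult.commute)
qed

abbreviation cls where "cls \<equiv> frob_cls scale p"
definition xx where "xx c = inv_into UNIV h (cls c)"

lemma h_bij: "bij_betw h UNIV (frob_pullback scale p)"
  using iso unfolding frob_pullback_iso_def by blast

lemma h_inj: "inj h" using h_bij bij_betw_def by blast

lemma h_xx: "fsupp c \<Longrightarrow> h (xx c) = cls c"
  unfolding xx_def
  by (rule f_inv_into_f) (use h_bij in \<open>auto simp: bij_betw_def frob_pullback_def\<close>)

lemma xx_h: "xx c = x" if "h x = cls c"
  unfolding xx_def using that[symmetric] h_inj by simp

lemma xx_add: "fsupp c \<Longrightarrow> fsupp d \<Longrightarrow> xx (\<lambda>z. c z + d z) = xx c + xx d"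
  using iso h_xx unfolding frob_pullback_iso_def by (intro xx_h) blast

lemma xx_act: "fsupp c \<Longrightarrow> xx (frob_act r c) = r *s xx c"
  using iso h_xx unfolding frob_pullback_iso_def by (intro xx_h) blast

lemma rel_plus: "c \<in> frob_rel scale p \<Longrightarrow> d \<in> frob_rel scale p \<Longrightarrow> (\<lambda>x. c x + d x) \<in> frob_rel scale p"
  by (rule frob_rel.plus)

lemma rel_minus: assumes "c \<in> frob_rel scale p" "d \<in> frob_rel scale p" shows "(\<lambda>x. c x - d x) \<in> frob_rel scale p"
proof -
  have "(\<lambda>x. - d x) \<in> frob_rel scale p" by (rule frob_rel.uminus[OF assms(2)])
  from frob_rel.plus[OF assms(1) this] show ?thesis by simp
qed

lemma cls_eq: assumes "(\<lambda>z. c z - d z) \<in> frob_rel scale p" shows "cls c = cls d"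
proof -
  have "e \<in> cls c \<longleftrightarrow> e \<in> cls d" for e
  proof
    assume "e \<in> cls c"
    then have "(\<lambda>x. c x - e x) \<in> frob_rel scale p" unfolding frob_cls_def by simp
    from rel_minus[OF this assms] show "e \<in> cls d" unfolding frob_cls_def by simp
  next
    assume "e \<in> cls d"
    then have "(\<lambda>x. d x - e x) \<in> frob_rel scale p" unfolding frob_cls_def by simp
    from rel_plus[OF this assms] show "e \<in> cls c" unfolding frob_cls_def by simp
  qed
  then show ?thesis by blast
qed

lemma xx_rel: assumes "(\<lambda>z. c z - d z) \<in> frob_rel scale p" shows "xx c = xx d"
  using cls_eq[OF assms] unfolding xx_def by simp

lemma rel_of_xx:
  assumes "fsupp c" "fsupp d" "xx c = xx d"
  shows "(\<lambda>z. c z - d z) \<in> frob_rel scale p"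
proof -
  have "cls c = cls d" using h_xx[OF assms(1)] h_xx[OF assms(2)] assms(3) by simp
  moreover have "d \<in> cls d" unfolding frob_cls_def using frob_rel.zero by simp
  ultimately show ?thesis unfolding frob_cls_def by auto
qed

lemma xx_zero: "xx (\<lambda>_. 0) = 0"
  using xx_add[of "\<lambda>_. 0" "\<lambda>_. 0"] by simp

lemma xx_neg: "fsupp c \<Longrightarrow> xx (\<lambda>z. - c z) = - xx c"
proof -
  assume "fsupp c"
  then have "xx c + xx (\<lambda>z. - c z) = 0" using xx_add[of c "\<lambda>z. - c z"] xx_zero by simp
  then show ?thesis using add.inverse_unique by metis
qed

lemma frob_act_delta: "frob_act s (delta (1, m)) = delta (s, m)"
proof (rule ext, clarify)
  fix t m'
  have "{s'. s * s' = t \<and> delta (1, m) (s', m') \<noteq> 0} = (if t = s \<and> m' = m then {1} else {})"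
    by (auto simp: delta_def)
  then show "frob_act s (delta (1, m)) (t, m') = delta (s, m) (t, m')"
    unfolding frob_act_def by (simp add: delta_def)
qed

lemma xx_delta_scale: "xx (delta (s, m)) = s *s xx (delta (1, m))"
  using xx_act[of "delta (1, m)" s] by (simp add: frob_act_delta)

lemma xx_delta_add: "xx (delta (1, m + m')) = xx (delta (1, m)) + xx (delta (1, m'))"
proof -
  have "(\<lambda>x. delta (1, m + m') x - (\<lambda>z. delta (1, m) z + delta (1, m') z) x) \<in> frob_rel scale p"
    using frob_rel.add_right[of 1 m m' scale p] by (simp add: diff_diff_eq)
  then have "xx (delta (1, m + m')) = xx (\<lambda>z. delta (1, m) z + delta (1, m') z)" by (rule xx_rel)
  then show ?thesis by (simp add: xx_add)
qed

lemma xx_delta_frob: "xx (delta (1, a *s m)) = (a ^ p) *s xx (delta (1, m))"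
proof -
  have "(\<lambda>x. delta (1 * a ^ p, m) x - delta (1, a *s m) x) \<in> frob_rel scale p"
    by (rule frob_rel.frob)
  then have "xx (delta (1 * a ^ p, m)) = xx (delta (1, a *s m))" by (rule xx_rel)
  then show ?thesis using xx_delta_scale[of "a ^ p" m] by simp
qed

lemma xx_delta_zero: "xx (delta (1, 0)) = 0"
  using xx_delta_add[of 0 0] by simp

definition g' where "g' i = xx (delta (1, g i))"

lemma xx_delta_sum: "finite A \<Longrightarrow> xx (delta (1, \<Sum>i\<in>A. a i *s g i)) = (\<Sum>i\<in>A. (a i ^ p) *s g' i)"
  by (induction A rule: finite_induct) (simp_all add: xx_delta_zero xx_delta_add xx_delta_frob g'_def)

lemma xx_sum: "finite A \<Longrightarrow> (\<And>i. i \<in> A \<Longrightarrow> fsupp (f i)) \<Longrightarrow> xx (\<lambda>z. \<Sum>i\<in>A. f i z) = (\<Sum>i\<in>A. xx (f i))"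
proof (induction A rule: finite_induct)
  case empty then show ?case using xx_zero by simp
next
  case (insert x F)
  then show ?case using xx_add[of "f x" "\<lambda>z. \<Sum>i\<in>F. f i z"] fsupp_sum[of F f] by simp
qed

lemma span_g': "span (g' ` S) = UNIV"
proof -
  have "xx c \<in> span (g' ` S)" if "fsupp c" for c
  proof (rule fsupp_induct[where P="\<lambda>c. xx c \<in> span (g' ` S)", OF that])
    show "xx (\<lambda>_. 0) \<in> span (g' ` S)" using xx_zero span_zero by simp
  next
    fix c d :: "'a \<times> 'b \<Rightarrow> int"
    assume "fsupp c" "fsupp d" "xx c \<in> span (g' ` S)" "xx d \<in> span (g' ` S)"
    then show "xx (\<lambda>z. c z + d z) \<in> span (g' ` S)" by (simp add: xx_add span_add)
  next
    fix c :: "'a \<times> 'b \<Rightarrow> int"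
    assume "fsupp c" "xx c \<in> span (g' ` S)"
    then show "xx (\<lambda>z. - c z) \<in> span (g' ` S)" by (simp add: xx_neg span_neg)
  next
    fix z :: "'a \<times> 'b"
    obtain s m where z: "z = (s, m)" by (cases z)
    obtain a where a: "m = (\<Sum>i\<in>S. a i *s g i)" using span_image_repr[OF finS] spanS by blast
    have "xx (delta (1, m)) \<in> span (g' ` S)"
      using xx_delta_sum[OF finS, of a]
      by (simp add: a) (rule span_sum, rule span_scale, rule span_base, simp)
    then have "s *s xx (delta (1, m)) \<in> span (g' ` S)" by (rule span_scale)
    then show "xx (delta z) \<in> span (g' ` S)" unfolding z using xx_delta_scale[of s m] by simp
  qed
  note main = this
  have "y \<in> span (g' ` S)" for y
  proof -
    have "h y \<in> frob_pullback scale p" using bij_betw_imp_surj_on[OF h_bij] rangeI[of h y] by simp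
    then obtain c where c: "fsupp c" "h y = cls c" unfolding frob_pullback_def by blast
    then have "y = xx c" using xx_h[OF c(2)] by simp
    then show ?thesis using main[OF c(1)] by simp
  qed
  then show ?thesis by (simp add: set_eq_iff)
qed

end

context frob_setup begin

lemma RlI: "(\<And>i. i \<notin> S \<Longrightarrow> c i = 0) \<Longrightarrow> (\<Sum>i\<in>S. c i *s g i) = 0 \<Longrightarrow> c \<in> Rl scale S g"
  unfolding Rl_def by auto

definition \<sigma> where "\<sigma> m = (SOME a. (\<forall>i. i \<notin> S \<longrightarrow> a i = 0) \<and> m = (\<Sum>i\<in>S. a i *s g i))"

lemma \<sigma>: "(\<forall>i. i \<notin> S \<longrightarrow> \<sigma> m i = 0) \<and> m = (\<Sum>i\<in>S. \<sigma> m i *s g i)"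
proof -
  have "\<exists>a. (\<forall>i. i \<notin> S \<longrightarrow> a i = 0) \<and> m = (\<Sum>i\<in>S. a i *s g i)"
    using span_image_repr_supp[OF finS, where y=m and g=g] spanS by simp
  then show ?thesis unfolding \<sigma>_def by (rule someI_ex)
qed

lemma \<sigma>_out: "i \<notin> S \<Longrightarrow> \<sigma> m i = 0" using \<sigma> by blast
lemma \<sigma>_sum: "(\<Sum>i\<in>S. \<sigma> m i *s g i) = m" using \<sigma> by metis

lemma \<sigma>_add_rel: "(\<lambda>i. \<sigma> (m + m') i - \<sigma> m i - \<sigma> m' i) \<in> Rl scale S g"
proof (rule RlI)
  show "\<And>i. i \<notin> S \<Longrightarrow> \<sigma> (m + m') i - \<sigma> m i - \<sigma> m' i = 0" by (simp add: \<sigma>_out)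
  have "(\<Sum>i\<in>S. (\<sigma> (m + m') i - \<sigma> m i - \<sigma> m' i) *s g i)
      = (\<Sum>i\<in>S. \<sigma> (m + m') i *s g i) - (\<Sum>i\<in>S. \<sigma> m i *s g i) - (\<Sum>i\<in>S. \<sigma> m' i *s g i)"
    by (simp add: scale_left_diff_distrib sum_subtractf)
  also have "\<dots> = 0" by (simp add: \<sigma>_sum)
  finally show "(\<Sum>i\<in>S. (\<sigma> (m + m') i - \<sigma> m i - \<sigma> m' i) *s g i) = 0" .
qed

lemma \<sigma>_frob_rel: "(\<lambda>i. \<sigma> (a *s m) i - a * \<sigma> m i) \<in> Rl scale S g"
proof (rule RlI)
  show "\<And>i. i \<notin> S \<Longrightarrow> \<sigma> (a *s m) i - a * \<sigma> m i = 0" by (simp add: \<sigma>_out)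
  have "(\<Sum>i\<in>S. (\<sigma> (a *s m) i - a * \<sigma> m i) *s g i)
      = (\<Sum>i\<in>S. \<sigma> (a *s m) i *s g i) - a *s (\<Sum>i\<in>S. \<sigma> m i *s g i)"
    by (simp add: scale_left_diff_distrib sum_subtractf scale_sum_right)
  also have "\<dots> = 0" by (simp add: \<sigma>_sum)
  finally show "(\<Sum>i\<in>S. (\<sigma> (a *s m) i - a * \<sigma> m i) *s g i) = 0" .
qed

lemma \<sigma>_g_rel:
  assumes i: "i \<in> S"
  shows "(\<lambda>l. \<sigma> (g i) l - (if l = i then 1 else 0)) \<in> Rl scale S g"
proof (rule RlI)
  show "\<And>l. l \<notin> S \<Longrightarrow> \<sigma> (g i) l - (if l = i then 1 else 0) = 0" using i by (auto simp: \<sigma>_out)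
  have d: "(\<Sum>l\<in>S. (if l = i then 1 else 0) *s g l) = g i"
    using i finS by (simp add: if_distrib[of "\<lambda>t. t *s _"] sum.delta cong: if_cong)
  have "(\<Sum>l\<in>S. (\<sigma> (g i) l - (if l = i then 1 else 0)) *s g l)
      = (\<Sum>l\<in>S. \<sigma> (g i) l *s g l) - (\<Sum>l\<in>S. (if l = i then 1 else 0) *s g l)"
    by (simp only: scale_left_diff_distrib sum_subtractf)
  also have "\<dots> = 0" by (simp only: d \<sigma>_sum diff_self)
  finally show "(\<Sum>l\<in>S. (\<sigma> (g i) l - (if l = i then 1 else 0)) *s g l) = 0" .
qed

definition \<phi> where "\<phi> j z = fst z * (\<sigma> (snd z) j) ^ p"
definition \<Phi> where "\<Phi> j c = (\<Sum>z\<in>{z. c z \<noteq> 0}. of_int (c z) * \<phi> j z)"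

lemma \<Phi>_eq:
  assumes "finite F" "{z. c z \<noteq> 0} \<subseteq> F"
  shows "\<Phi> j c = (\<Sum>z\<in>F. of_int (c z) * \<phi> j z)"
  unfolding \<Phi>_def by (rule sum.mono_neutral_left) (use assms in auto)

lemma \<Phi>_add:
  assumes c: "fsupp c" and d: "fsupp d"
  shows "\<Phi> j (\<lambda>z. c z + d z) = \<Phi> j c + \<Phi> j d"
proof -
  let ?F = "{z. c z \<noteq> 0} \<union> {z. d z \<noteq> 0}"
  have fF: "finite ?F" using c d unfolding fsupp_def by simp
  have "\<Phi> j (\<lambda>z. c z + d z) = (\<Sum>z\<in>?F. of_int (c z + d z) * \<phi> j z)"
    by (rule \<Phi>_eq[OF fF]) auto
  also have "\<dots> = (\<Sum>z\<in>?F. of_int (c z) * \<phi> j z) + (\<Sum>z\<in>?F. of_int (d z) * \<phi> j z)"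
    by (simp add: distrib_right sum.distrib)
  also have "\<dots> = \<Phi> j c + \<Phi> j d"
    using \<Phi>_eq[OF fF, of c j] \<Phi>_eq[OF fF, of d j] by auto
  finally show ?thesis .
qed

lemma \<Phi>_neg: "\<Phi> j (\<lambda>z. - c z) = - \<Phi> j c"
  unfolding \<Phi>_def by (simp add: sum_negf)

lemma \<Phi>_delta: "\<Phi> j (delta z) = \<phi> j z"
proof -
  have "{y. delta z y \<noteq> 0} = {z}" by (auto simp: delta_def)
  then show ?thesis unfolding \<Phi>_def by (simp add: delta_def)
qed

lemma \<Phi>_zero: "\<Phi> j (\<lambda>_. 0) = 0"
  unfolding \<Phi>_def by simp

lemma \<Phi>_diff:
  assumes c: "fsupp c" and d: "fsupp d"
  shows "\<Phi> j (\<lambda>z. c z - d z) = \<Phi> j c - \<Phi> j d"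
proof -
  let ?F = "{z. c z \<noteq> 0} \<union> {z. d z \<noteq> 0}"
  have fF: "finite ?F" using c d unfolding fsupp_def by simp
  have "\<Phi> j (\<lambda>z. c z - d z) = (\<Sum>z\<in>?F. of_int (c z - d z) * \<phi> j z)"
    by (rule \<Phi>_eq[OF fF]) auto
  also have "\<dots> = (\<Sum>z\<in>?F. of_int (c z) * \<phi> j z) - (\<Sum>z\<in>?F. of_int (d z) * \<phi> j z)"
    by (simp add: left_diff_distrib sum_subtractf)
  also have "\<dots> = \<Phi> j c - \<Phi> j d"
    using \<Phi>_eq[OF fF, of c j] \<Phi>_eq[OF fF, of d j] by auto
  finally show ?thesis .
qed

lemma fsupp_diff: "fsupp c \<Longrightarrow> fsupp d \<Longrightarrow> fsupp (\<lambda>z. c z - d z)"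
  using fsupp_add[of c "\<lambda>z. - d z"] fsupp_neg[of d] by simp

lemma \<Phi>_2: "\<Phi> j (\<lambda>x. delta a x - delta b x) = \<phi> j a - \<phi> j b"
  using \<Phi>_diff[of "delta a" "delta b" j] by (simp add: \<Phi>_delta)

lemma \<Phi>_3: "\<Phi> j (\<lambda>x. delta a x - delta b x - delta c x) = \<phi> j a - \<phi> j b - \<phi> j c"
  using \<Phi>_diff[of "\<lambda>x. delta a x - delta b x" "delta c" j] fsupp_diff[of "delta a" "delta b"]
  by (simp add: \<Phi>_delta \<Phi>_2)

lemma \<Phi>_sum: "finite A \<Longrightarrow> (\<And>i. i \<in> A \<Longrightarrow> fsupp (f i)) \<Longrightarrow> \<Phi> j (\<lambda>z. \<Sum>i\<in>A. f i z) = (\<Sum>i\<in>A. \<Phi> j (f i))"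
proof (induction A rule: finite_induct)
  case empty then show ?case using \<Phi>_zero by simp
next
  case (insert x F)
  then show ?case using \<Phi>_add[of "f x" "\<lambda>z. \<Sum>i\<in>F. f i z" j] fsupp_sum[of F f] by simp
qed

lemma \<Phi>_rel: "c \<in> frob_rel scale p \<Longrightarrow> MI (\<Phi> j c)"
proof (induction rule: frob_rel.induct)
  case zero then show ?case by (simp add: \<Phi>_zero MI_0)
next
  case (add_left s s' m)
  have "\<phi> j (s + s', m) - \<phi> j (s, m) - \<phi> j (s', m) = 0"
    unfolding \<phi>_def by (simp add: algebra_simps)
  then show ?case by (simp add: \<Phi>_3 MI_0)
next
  case (add_right s m m')
  define k where "k = (\<lambda>i. \<sigma> (m + m') i - \<sigma> m i - \<sigma> m' i)"
  have k: "k \<in> Rl scale S g" unfolding k_def by (rule \<sigma>_add_rel)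
  have "\<sigma> (m + m') j = \<sigma> m j + \<sigma> m' j + k j" by (simp add: k_def)
  then have "\<sigma> (m + m') j ^ p = \<sigma> m j ^ p + \<sigma> m' j ^ p + k j ^ p"
    by (simp only: frob_add)
  then have "\<phi> j (s, m + m') - \<phi> j (s, m) - \<phi> j (s, m') = s * k j ^ p"
    unfolding \<phi>_def by (simp add: algebra_simps)
  moreover have "MI (s * k j ^ p)" by (rule MI_mult[OF MI_pow[OF k]])
  ultimately show ?case by (simp add: \<Phi>_3)
next
  case (frob s a m)
  define k where "k = (\<lambda>i. \<sigma> (a *s m) i - a * \<sigma> m i)"
  have k: "k \<in> Rl scale S g" unfolding k_def by (rule \<sigma>_frob_rel)
  have "\<sigma> (a *s m) j = a * \<sigma> m j + k j" by (simp add: k_def)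
  then have "\<sigma> (a *s m) j ^ p = a ^ p * \<sigma> m j ^ p + k j ^ p"
    by (simp only: frob_add power_mult_distrib)
  then have "\<phi> j (s * a ^ p, m) - \<phi> j (s, a *s m) = - (s * k j ^ p)"
    unfolding \<phi>_def by (simp add: algebra_simps)
  moreover have "MI (- (s * k j ^ p))" by (rule MI_neg[OF MI_mult[OF MI_pow[OF k]]])
  ultimately show ?case by (simp add: \<Phi>_2)
next
  case (plus c d)
  then show ?case by (simp add: \<Phi>_add frob_rel_fsupp MI_add)
next
  case (uminus c)
  then show ?case by (simp add: \<Phi>_neg MI_neg)
qed

end

context frob_setup begin

lemma rel_g'_MI:
  assumes c0: "\<And>i. i \<notin> S \<Longrightarrow> c i = 0" and cs: "(\<Sum>i\<in>S. c i *s g' i) = 0"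
  shows "MI (c j)"
proof -
  define D where "D = (\<lambda>w. \<Sum>i\<in>S. delta (c i, g i) w)"
  have fD: "fsupp D" unfolding D_def by (rule fsupp_sum[OF finS]) simp
  have "xx D = (\<Sum>i\<in>S. xx (delta (c i, g i)))"
    unfolding D_def by (rule xx_sum[OF finS]) simp
  also have "\<dots> = (\<Sum>i\<in>S. c i *s g' i)"
    by (rule sum.cong) (simp_all add: g'_def xx_delta_scale[of "c _" "g _"])
  also have "\<dots> = xx (\<lambda>_. 0)" using cs xx_zero by simp
  finally have "(\<lambda>z. D z - 0) \<in> frob_rel scale p"
    using rel_of_xx[OF fD fsupp_zero] by simp
  then have "D \<in> frob_rel scale p" by simp
  then have MD: "MI (\<Phi> j D)" by (rule \<Phi>_rel)
  define k where "k i = (\<lambda>l. \<sigma> (g i) l - (if l = i then 1 else 0))" for i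
  have kR: "i \<in> S \<Longrightarrow> k i \<in> Rl scale S g" for i unfolding k_def by (rule \<sigma>_g_rel)
  have "\<Phi> j D = (\<Sum>i\<in>S. \<Phi> j (delta (c i, g i)))"
    unfolding D_def by (rule \<Phi>_sum[OF finS]) simp
  also have "\<dots> = (\<Sum>i\<in>S. c i * (\<sigma> (g i) j) ^ p)"
    by (simp add: \<Phi>_delta \<phi>_def)
  also have "\<dots> = (\<Sum>i\<in>S. (if j = i then c i else 0) + c i * k i j ^ p)"
  proof (rule sum.cong)
    fix i assume i: "i \<in> S"
    have "\<sigma> (g i) j = (if j = i then 1 else 0) + k i j" by (simp add: k_def)
    then have "\<sigma> (g i) j ^ p = (if j = i then 1 else 0) ^ p + k i j ^ p" by (simp only: frob_add)
    also have "(if j = i then (1::'a) else 0) ^ p = (if j = i then 1 else 0)" using p_pos by (simp add: zero_power)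
    finally show "c i * \<sigma> (g i) j ^ p = (if j = i then c i else 0) + c i * k i j ^ p"
      by (simp add: distrib_left)
  qed simp
  also have "\<dots> = c j + (\<Sum>i\<in>S. c i * k i j ^ p)"
    using c0[of j] finS by (simp add: sum.distrib sum.delta)
  finally have "c j = \<Phi> j D - (\<Sum>i\<in>S. c i * k i j ^ p)" by simp
  moreover have "MI (\<Sum>i\<in>S. c i * k i j ^ p)"
    by (rule MI_sum, rule MI_mult, rule MI_pow, rule kR)
  ultimately show ?thesis using MD MI_diff by simp
qed

lemma rel_g_MI:
  assumes c: "c \<in> Rl scale S g"
  shows "MI (c q)"
proof (cases "q \<in> S")
  case False then show ?thesis using R_out[OF c False] MI_0 by simp
next
  case q: True
  have c0: "\<And>i. i \<notin> S \<Longrightarrow> c i = 0" and cs: "(\<Sum>i\<in>S. c i *s g i) = 0"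
    using c unfolding Rl_def by auto
  have "\<forall>i. \<exists>a. (\<forall>l. l \<notin> S \<longrightarrow> a l = 0) \<and> g i = (\<Sum>l\<in>S. a l *s g' l)"
    using span_image_repr_supp[OF finS] span_g' by simp
  then obtain P where P: "\<And>i. (\<forall>l. l \<notin> S \<longrightarrow> P i l = 0) \<and> g i = (\<Sum>l\<in>S. P i l *s g' l)"
    using choice[of "\<lambda>i a. (\<forall>l. l \<notin> S \<longrightarrow> a l = 0) \<and> g i = (\<Sum>l\<in>S. a l *s g' l)"] by blast
  have "\<forall>l. \<exists>a. (\<forall>q. q \<notin> S \<longrightarrow> a q = 0) \<and> g' l = (\<Sum>q\<in>S. a q *s g q)"
    using span_image_repr_supp[OF finS] spanS by simp
  then obtain Q where Q: "\<And>l. (\<forall>q. q \<notin> S \<longrightarrow> Q l q = 0) \<and> g' l = (\<Sum>q\<in>S. Q l q *s g q)"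
    using choice[of "\<lambda>l a. (\<forall>q. q \<notin> S \<longrightarrow> a q = 0) \<and> g' l = (\<Sum>q\<in>S. a q *s g q)"] by blast
  define d where "d l = (\<Sum>i\<in>S. c i * P i l)" for l
  have d0: "l \<notin> S \<Longrightarrow> d l = 0" for l unfolding d_def using P by simp
  have "(\<Sum>l\<in>S. d l *s g' l) = (\<Sum>l\<in>S. \<Sum>i\<in>S. c i *s (P i l *s g' l))"
    unfolding d_def by (simp add: scale_sum_left)
  also have "\<dots> = (\<Sum>i\<in>S. \<Sum>l\<in>S. c i *s (P i l *s g' l))" by (rule sum.swap)
  also have "\<dots> = (\<Sum>i\<in>S. c i *s g i)"
  proof (rule sum.cong)
    fix i assume "i \<in> S"
    have "(\<Sum>l\<in>S. c i *s (P i l *s g' l)) = c i *s (\<Sum>l\<in>S. P i l *s g' l)"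
      by (simp add: scale_sum_right)
    also have "\<dots> = c i *s g i" using P[of i] by simp
    finally show "(\<Sum>l\<in>S. c i *s (P i l *s g' l)) = c i *s g i" .
  qed simp
  also have "\<dots> = 0" by (rule cs)
  finally have dMI: "MI (d l)" for l by (intro rel_g'_MI[of d l] d0)
  define E where "E i q' = (if q' = i then 1 else 0) - (\<Sum>l\<in>S. P i l * Q l q')" for i q'
  have ER: "(\<lambda>q'. E i q') \<in> Rl scale S g" if i: "i \<in> S" for i
  proof (rule RlI)
    fix q' assume "q' \<notin> S"
    then show "E i q' = 0" unfolding E_def using i Q by auto
  next
    have d: "(\<Sum>q'\<in>S. (if q' = i then 1 else 0) *s g q') = g i"
      using i finS by (simp add: if_distrib[of "\<lambda>t. t *s _"] sum.delta cong: if_cong)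
    have "(\<Sum>q'\<in>S. (\<Sum>l\<in>S. P i l * Q l q') *s g q') = (\<Sum>q'\<in>S. \<Sum>l\<in>S. P i l *s (Q l q' *s g q'))"
      by (simp add: scale_sum_left)
    also have "\<dots> = (\<Sum>l\<in>S. \<Sum>q'\<in>S. P i l *s (Q l q' *s g q'))" by (rule sum.swap)
    also have "\<dots> = (\<Sum>l\<in>S. P i l *s g' l)"
    proof (rule sum.cong)
      fix l assume "l \<in> S"
      have "(\<Sum>q'\<in>S. P i l *s (Q l q' *s g q')) = P i l *s (\<Sum>q'\<in>S. Q l q' *s g q')"
        by (simp add: scale_sum_right)
      also have "\<dots> = P i l *s g' l" using Q[of l] by simp
      finally show "(\<Sum>q'\<in>S. P i l *s (Q l q' *s g q')) = P i l *s g' l" .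
    qed simp
    also have "\<dots> = g i" using P[of i] by simp
    finally have e2: "(\<Sum>q'\<in>S. (\<Sum>l\<in>S. P i l * Q l q') *s g q') = g i" .
    have "(\<Sum>q'\<in>S. E i q' *s g q') = (\<Sum>q'\<in>S. (if q' = i then 1 else 0) *s g q') - (\<Sum>q'\<in>S. (\<Sum>l\<in>S. P i l * Q l q') *s g q')"
      unfolding E_def by (simp only: scale_left_diff_distrib sum_subtractf)
    also have "\<dots> = 0" by (simp only: d e2 diff_self)
    finally show "(\<Sum>q'\<in>S. E i q' *s g q') = 0" .
  qed
  have "c q = (\<Sum>i\<in>S. c i * (if q = i then 1 else 0))"
    using q finS by (simp add: if_distrib[of "\<lambda>t. _ * t"] sum.delta cong: if_cong)
  also have "\<dots> = (\<Sum>i\<in>S. c i * (\<Sum>l\<in>S. P i l * Q l q) + E i q * c i)"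
    unfolding E_def by (rule sum.cong) (simp_all add: algebra_simps)
  also have "\<dots> = (\<Sum>i\<in>S. \<Sum>l\<in>S. c i * P i l * Q l q) + (\<Sum>i\<in>S. E i q * c i)"
    by (simp add: sum.distrib sum_distrib_left mult.assoc)
  also have "(\<Sum>i\<in>S. \<Sum>l\<in>S. c i * P i l * Q l q) = (\<Sum>l\<in>S. d l * Q l q)"
    unfolding d_def by (subst sum.swap) (simp add: sum_distrib_right)
  finally have ceq: "c q = (\<Sum>l\<in>S. d l * Q l q) + (\<Sum>i\<in>S. E i q * c i)" .
  have "MI (\<Sum>l\<in>S. d l * Q l q)" by (rule MI_sum, rule MI_mult_right, rule dMI)
  moreover have "MI (\<Sum>i\<in>S. E i q * c i)"
  proof (rule MI_sum)
    fix i assume i: "i \<in> S"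
    have "E i q \<in> mx" using relm[OF ER[OF i], of q] by simp
    then show "MI (E i q * c i)" by (rule MI_coord_mult[OF c])
  qed
  ultimately show ?thesis using ceq MI_add by simp
qed

lemma all_rel_zero:
  assumes c: "c \<in> Rl scale S g"
  shows "c = (\<lambda>_. 0)"
proof -
  have "\<forall>x\<in>X. \<exists>b. (\<forall>y\<in>X. b y \<in> mx) \<and> x = (\<Sum>y\<in>X. b y * y)"
  proof
    fix x assume "x \<in> X"
    then obtain l j where lj: "l \<in> L" "j \<in> S" "x = \<kappa> l j" unfolding X_def by auto
    have "MI (\<kappa> l j)" by (rule rel_g_MI[OF kR[OF lj(1)]])
    then show "\<exists>b. (\<forall>y\<in>X. b y \<in> mx) \<and> x = (\<Sum>y\<in>X. b y * y)" unfolding MI_def lj(3) .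
  qed
  then have X0: "\<forall>x\<in>X. x = 0" using nakayama[OF mx_ideal _ mx_proper finX] mx_unit by blast
  obtain a where a: "c = (\<lambda>i. \<Sum>l\<in>L. a l * \<kappa> l i)" using gen[OF c] by blast
  have "c i = 0" for i
  proof (cases "i \<in> S")
    case False then show ?thesis using R_out[OF c] by simp
  next
    case True
    have "\<kappa> l i = 0" if "l \<in> L" for l using X0 that True unfolding X_def by auto
    then show ?thesis using a by simp
  qed
  then show ?thesis by auto
qed

end

context module begin

lemma free_of_pres:
  assumes P: "pres scale S g L \<kappa>" and zero: "\<And>c. c \<in> Rl scale S g \<Longrightarrow> c = (\<lambda>_. 0)"
    and one: "(1::'a) \<noteq> 0"
  shows "free_module scale"
proof -
  have fS: "finite S" and sp: "span (g ` S) = UNIV" using P unfolding pres_def by auto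
  have inj: "inj_on g S"
  proof (rule inj_onI, rule ccontr)
    fix i j assume i: "i \<in> S" and j: "j \<in> S" and gij: "g i = g j" and ne: "i \<noteq> j"
    define c where "c l = (if l = i then 1 else 0) - (if l = j then (1::'a) else 0)" for l
    have s1: "(\<Sum>l\<in>S. (if l = i then 1 else 0) *s g l) = g i"
      using i fS by (simp add: if_distrib[of "\<lambda>t. t *s _"] sum.delta cong: if_cong)
    have s2: "(\<Sum>l\<in>S. (if l = j then 1 else 0) *s g l) = g j"
      using j fS by (simp add: if_distrib[of "\<lambda>t. t *s _"] sum.delta cong: if_cong)
    have "(\<Sum>l\<in>S. c l *s g l) = (\<Sum>l\<in>S. (if l = i then 1 else 0) *s g l) - (\<Sum>l\<in>S. (if l = j then 1 else 0) *s g l)"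
      unfolding c_def by (simp only: scale_left_diff_distrib sum_subtractf)
    also have "\<dots> = 0" using s1 s2 gij by simp
    finally have "c \<in> Rl scale S g" unfolding Rl_def c_def using i j by auto
    then have "c = (\<lambda>_. 0)" by (rule zero)
    then have "c i = 0" by (rule fun_cong[where x=i, THEN trans]) simp
    then show False using ne one unfolding c_def by simp
  qed
  have indep: "independent (g ` S)"
    unfolding dependent_explicit
  proof
    assume "\<exists>t u. finite t \<and> t \<subseteq> g ` S \<and> (\<Sum>v\<in>t. u v *s v) = 0 \<and> (\<exists>v\<in>t. u v \<noteq> 0)"
    then obtain t u v where t: "finite t" "t \<subseteq> g ` S" and tu: "(\<Sum>v\<in>t. u v *s v) = 0"
      and v: "v \<in> t" "u v \<noteq> 0" by blast
    define T where "T = {i \<in> S. g i \<in> t}"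
    have gT: "g ` T = t" using t(2) unfolding T_def by auto
    have injT: "inj_on g T" using inj unfolding T_def by (rule inj_on_subset) auto
    define c where "c i = (if i \<in> T then u (g i) else 0)" for i
    have "(\<Sum>i\<in>S. c i *s g i) = (\<Sum>i\<in>S. if g i \<in> t then u (g i) *s g i else 0)"
      unfolding c_def T_def by (rule sum.cong) auto
    also have "\<dots> = (\<Sum>i\<in>T. u (g i) *s g i)"
      unfolding T_def by (rule sum.inter_filter[OF fS, symmetric])
    also have "\<dots> = (\<Sum>v\<in>g ` T. u v *s v)"
      by (rule sum.reindex[OF injT, symmetric, unfolded comp_def])
    also have "\<dots> = 0" using gT tu by simp
    finally have "c \<in> Rl scale S g" unfolding Rl_def c_def T_def by auto
    then have cz: "c = (\<lambda>_. 0)" by (rule zero)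
    have c0: "c i = 0" for i using fun_cong[OF cz, of i] by simp
    obtain i where i: "i \<in> T" "v = g i" using v(1) gT by blast
    have "c i = u v" using i unfolding c_def by simp
    then show False using c0 v(2) by simp
  qed
  show ?thesis unfolding free_module_def using indep sp by blast
qed

end

theorem lemma2p8:
  fixes scale :: "'a::comm_ring_1 \<Rightarrow> 'b::ab_group_add \<Rightarrow> 'b"
    and p :: nat
  assumes "prime p"
    and "CHAR('a) = p"
    and "local_ring TYPE('a)"
    and "module scale"
    and "fin_presented scale"
    and "\<exists>h. frob_pullback_iso scale p h"
  shows "free_module scale"
proof -
  interpret module scale by (rule assms(4))
  obtain mx :: "'a set" where mx: "is_ideal mx" "1 \<notin> mx" "\<And>x. x \<notin> mx \<Longrightarrow> x dvd 1"
    using local_ring_max[OF assms(3)] by blast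
  obtain h where h: "frob_pullback_iso scale p h" using assms(6) by blast
  define Q where "Q n \<longleftrightarrow> (\<exists>S g L \<kappa>. pres scale S g L \<kappa> \<and> card S = n)" for n
  have "\<exists>n. Q n" using fin_presented_pres[OF assms(5)] unfolding Q_def by blast
  then have "Q (LEAST n. Q n)" by (rule LeastI_ex)
  then obtain S g L \<kappa> where P: "pres scale S g L \<kappa>" and cS: "card S = (LEAST n. Q n)"
    unfolding Q_def by blast
  have minimal: "card S \<le> card S'" if "pres scale S' g' L' \<kappa>'" for S' g' L' \<kappa>'
    unfolding cS by (rule Least_le) (use that in \<open>auto simp: Q_def\<close>)
  have fS: "finite S" using P unfolding pres_def by auto
  have relm: "c i \<in> mx" if c: "c \<in> Rl scale S g" for c i
  proof (rule ccontr)
    assume ni: "c i \<notin> mx"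
    have iS: "i \<in> S"
    proof (rule ccontr)
      assume "i \<notin> S"
      then have "c i = 0" using c unfolding Rl_def by auto
      then show False using ni ideal_zero[OF mx(1)] by simp
    qed
    have "c i dvd 1" using mx(3)[OF ni] .
    then obtain u where u: "1 = c i * u" by (rule dvdE)
    have "pres scale (S - {i}) g L (\<lambda>l j. \<kappa> l j - \<kappa> l i * u * c j)"
      by (rule pres_drop[OF P c iS]) (use u in simp)
    then have "card S \<le> card (S - {i})" by (rule minimal)
    moreover have "card S > 0" using fS iS card_gt_0_iff by blast
    ultimately show False using fS iS by simp
  qed
  have fs: "frob_setup scale p h mx S g L \<kappa>"
    by (intro frob_setup.intro frob_setup_axioms.intro assms(4) assms(1) assms(2) h mx P relm)
       (use mx in auto)
  have zero: "\<And>c. c \<in> Rl scale S g \<Longrightarrow> c = (\<lambda>_. 0)"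
    using frob_setup.all_rel_zero[OF fs] by blast
  have one: "(1::'a) \<noteq> 0" using mx(1) mx(2) ideal_zero by force
  show ?thesis by (rule free_of_pres[OF P zero one])
qed

end
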